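(* Let $$\mathcal L^H=\sum_{k,\alpha}\rho^\alpha_k\Big\langle\mathcal O^{(k)}_\alpha\exp\Big(\sum_{m,\beta}\lambda^\beta_m\mathcal O^{(m)}_\beta\Big)\Big\rangle_0\in\mathbb C[[\partial_z^m\lambda^\alpha_k,\partial_z^m\rho^\alpha_k]].$$ Then $\oint_C\mathscr J^{(1)}_{\mathcal L^H}$ satisfies the Maurer--Cartan equation in $(\mathrm{Obs}^{\oint_C},\delta,\{-,-\}_C)$: $$\delta\oint_C\mathscr J^{(1)}_{\mathcal L^H}+\tfrac12\Big\{\oint_C\mathscr J^{(1)}_{\mathcal L^H},\oint_C\mathscr J^{(1)}_{\mathcal L^H}\Big\}_C=0.$$
   Context: Genus zero data: $H$ finite-dimensional purely even complex vector space with basis $\{\mathcal O_\alpha\}$, distinguished $P=\mathcal O_1$, $\mathcal O^{(k)}_\alpha=t^k\mathcal O_\alpha$; symmetric multilinear genus zero correlators $\langle\mathcal O^{(k_1)}_{\alpha_1}\cdots\mathcal O^{(k_n)}_{\alpha_n}\rangle_0\in\mathbb C$ vanishing for $n<3$, with $g_{\alpha\beta}=\langle\mathcal O_\alpha\mathcal O_\beta P\rangle_0$ nondegenerate (inverse $g^{\alpha\beta}$, used to raise indices), satisfying the genus zero topological recursion relation $\langle\langle\mathcal O^{(i+1)}_\alpha\mathcal O^{(j)}_\beta\mathcal O^{(k)}_\gamma\rangle\rangle_0=\sum_\sigma\langle\langle\mathcal O^{(i)}_\alpha\mathcal O^{(0)\sigma}\rangle\rangle_0\langle\langle\mathcal O^{(0)}_\sigma\mathcal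 O^{(j)}_\beta\mathcal O^{(k)}_\gamma\rangle\rangle_0$, where $\langle\langle\cdots\rangle\rangle_0(\mathbf b)=\langle\cdots e^{\sum b^\alpha_k\mathcal O^{(k)}_\alpha}\rangle_0$. In $\mathcal L^H$ the exponential is expanded and the correlator applied multilinearly, producing a formal power series in the symbols. Setting on $\mathbb C^\times=\mathbb C/(z\sim z+1)$ with form $dz$: fields $\mathcal E^H=(\mathrm{PV}(\mathbb C^\times)\otimes H)[[t]]$, $\mu=\sum(\lambda^\alpha_k\otimes\mathcal O_\alpha t^k+\rho^\alpha_k\partial_z\otimes\mathcal O_\alpha t^k)$, $\lambda^\alpha_k,\rho^\alpha_k\in\Omega^{0,\bullet}(\mathbb C^\times)$, $t$ of degree 2, $\mathrm{PV}^{i,j}$ in degree $i+j$. Trace $\mathrm{Tr}(\mu)=\int(\mu\vdash dz)\wedge dz$; BV kernel $K_0=\sum_\alpha(\mathcal O^\alpha\otimes\mathcal O_\alpha)\partial_z\delta(z-w)(d\bar z-d\bar w)$. $\mathbb C[[\partial_z^m\lambda^\alpha_k,\partial_z^m\rho^\alpha_k]]$: formal power series in even $\partial_z^m\lambda^\alpha_k$ and odd $\partial_z^m\rho^\alpha_k$, with derivation $\partial_z$; differential $\delta$: odd derivation commuting with $\partial_z$, $\delta\lambda^\alpha_k=\partial_z\rho^\alpha_{k-1}$ ($k\ge1$), $\delta\lambda^\alpha_0=0$, $\delta\rho^\alpha_k=0$. $\mathscr J_{\mathcal L}=dz\,\mathcal L(\partial_z^m\lambda^\alpha_k,\partial_z^m\rho^\alpha_k)$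 (an $\Omega^{\bullet,\bullet}(\mathbb C^\times)$-valued function on fields), with 1-form and 2-form parts $\mathscr J^{(1)}_{\mathcal L},\mathscr J^{(2)}_{\mathcal L}$; $C=\{z\in[0,1]\}$. $\mathrm{Obs}^{\oint_C}=\{\oint_C\mathscr J^{(1)}_{\mathcal L}\}$ with differential $\oint_C\mathscr J^{(1)}_{\mathcal L}\mapsto\oint_C\mathscr J^{(1)}_{\delta\mathcal L}$ and bracket $\{\oint_C\mathscr J^{(1)}_{\mathcal L_1},\oint_C\mathscr J^{(1)}_{\mathcal L_2}\}_C:=\{\int_{\mathbb C^\times}\mathscr J^{(2)}_{\mathcal L_1},\oint_C\mathscr J^{(1)}_{\mathcal L_2}\}_{BV}$, where $\{S,\mathcal O\}_{BV}$ is the derivative of the observable $\mathcal O$ along the field transformation obtained by contracting $K_0$ with the functional derivative of the local functional $S$; concretely $\{\oint_C\mathscr J^{(1)}_{\mathcal L_1},\oint_C\mathscr J^{(1)}_{\mathcal L_2}\}_C=\oint_C\mathscr J^{(1)}_{[\mathcal L_1,\mathcal L_2]}$ with $[\mathcal L_1,\mathcal L_2]=\sum_{\alpha,\beta,k,m}\{(-\partial_z)^k\frac{\partial\mathcal L_1}{\partial(\partial_z^k\lambda^\alpha_0)}\}g^{\alpha\beta}\partial_z\{(-\partial_z)^m\frac{\partial\mathcal L_2}{\partial(\partial_z^m\lambda^\beta_0)}\}$. *)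

theory Defs
  imports "HOL-Analysis.Analysis" "HOL-Library.Multiset"
begin

text \<open>Basis of H indexed by a finite (linearly ordered) type 'i; an insertion
  O^{(k)}_alpha is the pair (alpha,k). A symmetric multilinear correlator is
  determined by its values on multisets of basis insertions.\<close>

type_synonym 'i corr = "('i \<times> nat) multiset \<Rightarrow> complex"

definition mfact :: "'a multiset \<Rightarrow> nat" where
  "mfact M = (\<Prod>x\<in>set_mset M. fact (count M x))"

text \<open>Coefficient of b^M in the formal power series <<X>>_0(b) = <X exp(sum b O)>_0.\<close>
definition dcorr :: "'i corr \<Rightarrow> ('i \<times> nat) multiset \<Rightarrow> ('i \<times> nat) multiset \<Rightarrow> complex" where
  "dcorr c X M = c (X + M) / of_nat (mfact M)"

definition gmet :: "'i corr \<Rightarrow> 'i \<Rightarrow> 'i \<Rightarrow> 'i \<Rightarrow> complex" where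
  "gmet c p a b = c {#(a,0), (b,0), (p,0)#}"

definition gmat :: "'i corr \<Rightarrow> 'i \<Rightarrow> complex ^ 'i ^ 'i" where
  "gmat c p = (\<chi> a b. gmet c p a b)"

definition ginv :: "'i::finite corr \<Rightarrow> 'i \<Rightarrow> 'i \<Rightarrow> 'i \<Rightarrow> complex" where
  "ginv c p a b = matrix_inv (gmat c p) $ a $ b"

text \<open>A variable (m,(a,k)) stands for d_z^m lambda^a_k (even) or d_z^m rho^a_k (odd).
  A monomial is (E,O): a multiset E of even variables and a finite set O of odd
  variables, representing x^E * (product of O in increasing order).\<close>

type_synonym 'i var = "nat \<times> 'i \<times> nat"
type_synonym 'i mono = "'i var multiset \<times> 'i var set"
type_synonym 'i ser = "'i mono \<Rightarrow> complex"

definition vless :: "'i::linorder var \<Rightarrow> 'i var \<Rightarrow> bool" where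
  "vless v w = (fst v < fst w \<or> (fst v = fst w \<and>
     (fst (snd v) < fst (snd w) \<or> (fst (snd v) = fst (snd w) \<and> snd (snd v) < snd (snd w)))))"

text \<open>Sign with x_A * x_B = ksign A B * x_(A union B) for disjoint finite A, B.\<close>
definition ksign :: "'i::linorder var set \<Rightarrow> 'i var set \<Rightarrow> complex" where
  "ksign A B = (-1) ^ card {(a,b). a \<in> A \<and> b \<in> B \<and> vless b a}"

definition smul :: "'i::linorder ser \<Rightarrow> 'i ser \<Rightarrow> 'i ser" where
  "smul f g N = (\<Sum>E1\<in>{E1. E1 \<subseteq># fst N}. \<Sum>O1\<in>Pow (snd N).
      ksign O1 (snd N - O1) * f (E1, O1) * g (fst N - E1, snd N - O1))"

definition gen_e :: "'i var \<Rightarrow> 'i ser" where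
  "gen_e w N = (if N = ({#w#}, {}) then 1 else 0)"

definition gen_o :: "'i var \<Rightarrow> 'i ser" where
  "gen_o w N = (if N = ({#}, {w}) then 1 else 0)"

text \<open>Partial derivative by an even variable, and left partial derivative by an odd one.\<close>
definition pe :: "'i var \<Rightarrow> 'i ser \<Rightarrow> 'i ser" where
  "pe v f N = of_nat (count (fst N) v + 1) * f (fst N + {#v#}, snd N)"

definition po :: "'i::linorder var \<Rightarrow> 'i ser \<Rightarrow> 'i ser" where
  "po v f N = (if v \<in> snd N then 0 else ksign {v} (snd N) * f (fst N, insert v (snd N)))"

definition sh :: "'i var \<Rightarrow> 'i var" where
  "sh v = (Suc (fst v), snd v)"

text \<open>The even derivation d_z (d_z(d^m x) = d^{m+1} x), D f = sum_v D(v) * d f/d v.\<close>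
definition dz :: "'i::linorder ser \<Rightarrow> 'i ser" where
  "dz f N = (\<Sum>\<^sub>\<infinity>v. smul (gen_e (sh v)) (pe v f) N + smul (gen_o (sh v)) (po v f) N)"

text \<open>The odd derivation delta: delta (d^m lambda^a_k) = d^{m+1} rho^a_{k-1} (k>=1),
  delta lambda^a_0 = 0, delta rho = 0.\<close>
definition delta :: "'i::linorder ser \<Rightarrow> 'i ser" where
  "delta f N = (\<Sum>\<^sub>\<infinity>v. (case v of (m,a,k) \<Rightarrow>
      if 1 \<le> k then smul (gen_o (Suc m, a, k - 1)) (pe v f) N else 0))"

definition vd :: "'i \<Rightarrow> 'i::linorder ser \<Rightarrow> 'i ser" where
  "vd a f N = (\<Sum>k. (-1) ^ k * (dz ^^ k) (pe (k, a, 0) f) N)"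

definition br :: "'i::{finite,linorder} corr \<Rightarrow> 'i \<Rightarrow> 'i ser \<Rightarrow> 'i ser \<Rightarrow> 'i ser" where
  "br c p f g N = (\<Sum>a\<in>UNIV. \<Sum>b\<in>UNIV. ginv c p a b * smul (vd a f) (dz (vd b g)) N)"

text \<open>L^H = sum_{k,a} rho^a_k <O^{(k)}_a exp(sum lambda^b_m O^{(m)}_b)>_0.\<close>
definition LH :: "'i corr \<Rightarrow> 'i ser" where
  "LH c N = (if (\<forall>v\<in>#fst N. fst v = 0) \<and> card (snd N) = 1 \<and> (\<forall>v\<in>snd N. fst v = 0)
     then dcorr c {#snd (the_elem (snd N))#} (image_mset snd (fst N)) else 0)"

end

theory Submission imports Defs begin

lemma ginv_sym:
  assumes "invertible (gmat c p)"
  shows "ginv c p a b = ginv c p b a"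
proof -
  let ?A = "gmat c p"
  have ex: "\<exists>A'. ?A ** A' = mat 1 \<and> A' ** ?A = mat 1" using assms by (simp add: invertible_def)
  have I: "?A ** matrix_inv ?A = mat 1 \<and> matrix_inv ?A ** ?A = mat 1"
    unfolding matrix_inv_def by (rule someI_ex[OF ex])
  have sym: "transpose ?A = ?A"
    by (simp add: gmat_def gmet_def transpose_def vec_eq_iff add_mset_commute)
  have "transpose (matrix_inv ?A) ** ?A = mat 1"
    by (metis I matrix_transpose_mul sym transpose_mat)
  then have e: "transpose (matrix_inv ?A) = matrix_inv ?A"
    by (metis I matrix_mul_assoc matrix_mul_lid matrix_mul_rid)
  have "transpose (matrix_inv ?A) $ a $ b = matrix_inv ?A $ a $ b" by (simp add: e)
  then show ?thesis unfolding ginv_def by (simp add: transpose_def)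
qed

lemma finite_submsets: "finite {N. N \<subseteq># (M::'a multiset)}"
proof (induction M)
  case empty
  then show ?case by simp
next
  case (add x M)
  have "{N. N \<subseteq># add_mset x M} \<subseteq> {N. N \<subseteq># M} \<union> add_mset x ` {N. N \<subseteq># M}"
  proof
    fix N assume "N \<in> {N. N \<subseteq># add_mset x M}"
    then have N: "N \<subseteq># add_mset x M" by simp
    show "N \<in> {N. N \<subseteq># M} \<union> add_mset x ` {N. N \<subseteq># M}"
    proof (cases "x \<in># N")
      case True
      then have "N = add_mset x (N - {#x#})" by simp
      moreover have "N - {#x#} \<subseteq># M" using N True
        by (metis insert_DiffM add_mset_remove_trivial insert_subset_eq_iff)
      ultimately show ?thesis by blast
    next
      case False
      then have "N \<subseteq># M" using N
        by (simp add: inter_add_left1 subset_mset.inf.absorb_iff2)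
      then show ?thesis by blast
    qed
  qed
  moreover have "finite ({N. N \<subseteq># M} \<union> add_mset x ` {N. N \<subseteq># M})" using add by simp
  ultimately show ?case by (rule finite_subset)
qed

lemma mfact_add: "mfact (add_mset y M) = (count M y + 1) * mfact M"
proof -
  let ?S = "set_mset M"
  have "mfact (add_mset y M) = (\<Prod>x\<in>insert y ?S. fact (count (add_mset y M) x))"
    by (simp add: mfact_def)
  also have "\<dots> = fact (count M y + 1) * (\<Prod>x\<in>?S - {y}. fact (count (add_mset y M) x))"
    by (simp add: prod.insert_remove)
  also have "(\<Prod>x\<in>?S - {y}. fact (count (add_mset y M) x)) = (\<Prod>x\<in>?S - {y}. fact (count M x))"
    by (rule prod.cong) auto
  also have "mfact M = (\<Prod>x\<in>insert y ?S. fact (count M x))"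
  proof (cases "y \<in># M")
    case True then show ?thesis by (simp add: mfact_def insert_absorb)
  next
    case False then show ?thesis by (simp add: mfact_def not_in_iff)
  qed
  then have "mfact M = fact (count M y) * (\<Prod>x\<in>?S - {y}. fact (count M x))"
    by (simp add: prod.insert_remove)
  ultimately show ?thesis by (simp add: algebra_simps)
qed

lemma mfact_pos: "mfact M > 0"
  by (simp add: mfact_def)

lemma dcorr_add: "of_nat (count M y + 1) * dcorr c X (add_mset y M) = dcorr c (add_mset y X) M"
proof -
  have e: "X + add_mset y M = add_mset y X + M" by simp
  define k :: complex where "k = of_nat (count M y + 1)"
  define m :: complex where "m = of_nat (mfact M)"
  have k: "k \<noteq> 0" unfolding k_def by (simp only: of_nat_eq_0_iff)
  have m: "m \<noteq> 0" unfolding m_def using mfact_pos[of M] by simp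
  have "dcorr c X (add_mset y M) = c (add_mset y X + M) / (k * m)"
    unfolding dcorr_def e k_def m_def mfact_add of_nat_mult ..
  moreover have "dcorr c (add_mset y X) M = c (add_mset y X + M) / m"
    unfolding dcorr_def m_def ..
  moreover have "k * (C / (k * m)) = C / m" for C using k m by (simp add: field_simps)
  ultimately show ?thesis unfolding k_def[symmetric] by simp
qed

lemma ksign_empty1[simp]: "ksign {} B = 1" by (simp add: ksign_def)
lemma ksign_empty2[simp]: "ksign A {} = 1" by (simp add: ksign_def)
lemma ksign_single: "ksign {a} {b} = (if vless b a then -1 else 1)"
proof -
  have "{(x,y). x \<in> {a} \<and> y \<in> {b} \<and> vless y x} = (if vless b a then {(a,b)} else {})" by auto
  then show ?thesis by (simp add: ksign_def)
qed

lemma vless_irrefl[simp]: "\<not> vless v v" by (auto simp: vless_def)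
lemma vless_asym: "vless v w \<Longrightarrow> \<not> vless w v" by (auto simp: vless_def)
lemma vless_total: "v \<noteq> w \<Longrightarrow> vless v w \<or> vless w v"
  by (cases v; cases w) (auto simp: vless_def)
lemma vless_fst: "fst v < fst w \<Longrightarrow> vless v w" by (simp add: vless_def)

lemma smul_gen_e: "smul (gen_e w) f (E,Q) = (if finite Q \<and> w \<in># E then f (E - {#w#}, Q) else 0)"
proof (cases "finite Q")
  case False
  then show ?thesis by (simp add: smul_def)
next
  case fin: True
  have inner: "(\<Sum>Q1\<in>Pow Q. ksign Q1 (Q - Q1) * gen_e w (E1, Q1) * f (E - E1, Q - Q1))
     = (if E1 = {#w#} then f (E - E1, Q) else 0)" for E1
  proof -
    have "(\<Sum>Q1\<in>Pow Q. ksign Q1 (Q - Q1) * gen_e w (E1, Q1) * f (E - E1, Q - Q1))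
      = (\<Sum>Q1\<in>Pow Q. if Q1 = {} then (if E1 = {#w#} then f (E - E1, Q) else 0) else 0)"
      by (rule sum.cong) (auto simp: gen_e_def)
    also have "\<dots> = (if E1 = {#w#} then f (E - E1, Q) else 0)"
      using fin by (simp add: sum.delta)
    finally show ?thesis .
  qed
  have "smul (gen_e w) f (E,Q) = (\<Sum>E1\<in>{E1. E1 \<subseteq># E}. if E1 = {#w#} then f (E - E1, Q) else 0)"
    unfolding smul_def using inner by simp
  also have "\<dots> = (if w \<in># E then f (E - {#w#}, Q) else 0)"
    by (simp add: sum.delta' finite_submsets)
  finally show ?thesis using fin by simp
qed

lemma smul_gen_o: "smul (gen_o w) f (E,Q) = (if finite Q \<and> w \<in> Q then ksign {w} (Q - {w}) * f (E, Q - {w}) else 0)"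
proof (cases "finite Q")
  case False
  then show ?thesis by (simp add: smul_def)
next
  case fin: True
  have inner: "(\<Sum>Q1\<in>Pow Q. ksign Q1 (Q - Q1) * gen_o w (E1, Q1) * f (E - E1, Q - Q1))
     = (if E1 = {#} \<and> w \<in> Q then ksign {w} (Q - {w}) * f (E, Q - {w}) else 0)" for E1
  proof -
    have "(\<Sum>Q1\<in>Pow Q. ksign Q1 (Q - Q1) * gen_o w (E1, Q1) * f (E - E1, Q - Q1))
      = (\<Sum>Q1\<in>Pow Q. if Q1 = {w} then (if E1 = {#} then ksign {w} (Q - {w}) * f (E, Q - {w}) else 0) else 0)"
      by (rule sum.cong) (auto simp: gen_o_def)
    also have "\<dots> = (if E1 = {#} \<and> w \<in> Q then ksign {w} (Q - {w}) * f (E, Q - {w}) else 0)"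
      using fin by (simp add: sum.delta')
    finally show ?thesis .
  qed
  have "smul (gen_o w) f (E,Q) = (\<Sum>E1\<in>{E1. E1 \<subseteq># E}. if E1 = {#} \<and> w \<in> Q then ksign {w} (Q - {w}) * f (E, Q - {w}) else 0)"
    unfolding smul_def using inner by simp
  also have "\<dots> = (if w \<in> Q then ksign {w} (Q - {w}) * f (E, Q - {w}) else 0)"
    by (cases "w \<in> Q") (simp_all add: sum.delta' finite_submsets)
  finally show ?thesis using fin by simp
qed

lemma infsum_single_nz:
  fixes h :: "'a \<Rightarrow> complex"
  assumes "\<And>v. v \<noteq> v0 \<Longrightarrow> h v = 0"
  shows "infsum h UNIV = h v0"
proof -
  have "infsum h UNIV = infsum h {v0}"
    by (rule infsum_cong_neutral[where S=UNIV and T="{v0}" and f=h and g=h]) (simp_all add: assms)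
  then show ?thesis by simp
qed

lemma infsum_nz:
  fixes h :: "'a \<Rightarrow> complex"
  assumes "infsum h UNIV \<noteq> 0" shows "\<exists>v. h v \<noteq> 0"
proof (rule ccontr)
  assume "\<not> (\<exists>v. h v \<noteq> 0)"
  then have "infsum h UNIV = 0" by (intro infsum_0) simp
  with assms show False by simp
qed

lemma dz_eq: "dz f (E,Q) = infsum (\<lambda>v. (if finite Q \<and> sh v \<in># E then pe v f (E - {#sh v#}, Q) else 0)
   + (if finite Q \<and> sh v \<in> Q then ksign {sh v} (Q - {sh v}) * po v f (E, Q - {sh v}) else 0)) UNIV"
  unfolding dz_def smul_gen_e smul_gen_o by simp

lemma delta_eq: "delta f (E,Q) = infsum (\<lambda>v. case v of (m,a,k) \<Rightarrow>
   if 1 \<le> k \<and> finite Q \<and> (Suc m, a, k - 1) \<in> Q then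
     ksign {(Suc m, a, k - 1)} (Q - {(Suc m, a, k - 1)}) * pe v f (E, Q - {(Suc m, a, k - 1)}) else 0) UNIV"
  unfolding delta_def smul_gen_o by (intro arg_cong[where f="\<lambda>h. infsum h UNIV"] ext) auto


abbreviation lift :: "('i \<times> nat) multiset \<Rightarrow> 'i var multiset" where
  "lift M \<equiv> image_mset (Pair (0::nat)) M"

definition ip :: "'i \<times> nat \<Rightarrow> 'i \<times> nat" where "ip x = (fst x, Suc (snd x))"

lemma count_lift: "count (lift M) v = (if fst v = 0 then count M (snd v) else 0)"
proof -
  obtain n x where v: "v = (n, x)" by (cases v)
  show ?thesis unfolding v by (induction M) auto
qed

lemma lift_mem: "v \<in># lift M \<Longrightarrow> fst v = 0"
  by auto

lemma snd_lift[simp]: "image_mset snd (lift M) = M"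
  by (simp add: multiset.map_comp o_def)

lemma z0_lift: "(\<forall>v\<in>#E. fst v = 0) \<Longrightarrow> E = lift (image_mset snd E)"
proof -
  assume a: "\<forall>v\<in>#E. fst v = 0"
  have "lift (image_mset snd E) = image_mset (\<lambda>v. (0, snd v)) E" by (simp add: multiset.map_comp o_def)
  also have "\<dots> = image_mset id E"
    by (rule image_mset_cong) (use a in \<open>auto simp: prod_eq_iff\<close>)
  finally show ?thesis by simp
qed

lemma lift_inj: "lift M = lift M' \<longleftrightarrow> M = M'"
  by (metis snd_lift)

lemma lift_minus: "lift M - {#(0, y)#} = lift (M - {#y#})"
  by (simp add: multiset_eq_iff count_lift)

lemma lift_add: "add_mset (0, y) (lift M) = lift (add_mset y M)"
  by simp

lemma pe_app: "pe v f (E, Q) = of_nat (count E v + 1) * f (add_mset v E, Q)"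
  by (simp add: pe_def)

lemma po_app: "po v f (E, Q) = (if v \<in> Q then 0 else ksign {v} Q * f (E, insert v Q))"
  by (simp add: po_def)

lemma LH_supp: "LH c (E, Q) \<noteq> 0 \<Longrightarrow> \<exists>M u. E = lift M \<and> Q = {u} \<and> fst u = 0"
proof -
  assume a: "LH c (E, Q) \<noteq> 0"
  then have z: "\<forall>v\<in>#E. fst v = 0" and c1: "card Q = 1" and f: "\<forall>v\<in>Q. fst v = 0"
    by (auto simp: LH_def split: if_splits)
  from c1 obtain u where "Q = {u}" by (auto simp: card_Suc_eq)
  with z f show ?thesis using z0_lift[OF z] by blast
qed

lemma LH_val: "LH c (lift M, {u}) = (if fst u = 0 then dcorr c {#snd u#} M else 0)"
  by (auto simp: LH_def)

lemma pe_zero: "pe v (\<lambda>_. 0) = (\<lambda>_. (0::complex))" by (rule ext) (simp add: pe_def)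
lemma po_zero: "po v (\<lambda>_. 0) = (\<lambda>_. (0::complex))" by (rule ext) (simp add: po_def)
lemma smul_zero: "smul f (\<lambda>_. 0) = (\<lambda>_. 0)" by (rule ext) (simp add: smul_def)

lemma dz_zero: "dz (\<lambda>_. 0) = (\<lambda>_. (0::complex))"
  by (rule ext) (simp add: dz_def pe_zero po_zero smul_zero)

lemma dz_pow_zero: "(dz ^^ k) (\<lambda>_. 0) = (\<lambda>_. (0::complex))"
  by (induction k) (simp_all add: dz_zero)

lemma pe_LH_high: "k \<noteq> 0 \<Longrightarrow> pe (k, a, 0) (LH c) = (\<lambda>_. 0)"
  by (rule ext) (auto simp: pe_def LH_def)

lemma vd_LH: "vd a (LH c) = pe (0, a, 0) (LH c)"
proof (rule ext)
  fix N
  have "vd a (LH c) N = (\<Sum>k\<in>{0}. (-1) ^ k * (dz ^^ k) (pe (k, a, 0) (LH c)) N)"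
    unfolding vd_def
    by (rule suminf_finite) (auto simp: pe_LH_high dz_pow_zero)
  then show "vd a (LH c) N = pe (0, a, 0) (LH c) N" by simp
qed

lemma A_val: "vd a (LH c) (lift M, {u}) = (if fst u = 0 then dcorr c {#snd u, (a, 0)#} M else 0)"
proof -
  have "vd a (LH c) (lift M, {u}) = of_nat (count M (a,0) + 1) * LH c (add_mset (0,a,0) (lift M), {u})"
    by (simp add: vd_LH pe_app count_lift)
  moreover have "LH c (add_mset (0,a,0) (lift M), {u}) = (if fst u = 0 then dcorr c {#snd u#} (add_mset (a,0) M) else 0)"
    using LH_val[of c "add_mset (a,0) M" u] by simp
  moreover have "of_nat (count M (a,0) + 1) * dcorr c {#snd u#} (add_mset (a,0) M) = dcorr c {#snd u, (a, 0)#} M"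
    by (simp only: dcorr_add add_mset_commute)
  ultimately show ?thesis by simp
qed

lemma A_supp: "vd a (LH c) (E, Q) \<noteq> 0 \<Longrightarrow> \<exists>M u. E = lift M \<and> Q = {u} \<and> fst u = 0"
proof -
  assume "vd a (LH c) (E, Q) \<noteq> 0"
  then have "LH c (add_mset (0,a,0) E, Q) \<noteq> 0" by (simp add: vd_LH pe_app)
  then obtain M u where e: "add_mset (0,a,0) E = lift M" and "Q = {u}" "fst u = 0"
    using LH_supp by blast
  moreover have "\<forall>v\<in>#add_mset (0,a,0) E. fst v = 0" unfolding e by auto
  then have "\<forall>v\<in>#E. fst v = 0" by simp
  ultimately show ?thesis using z0_lift by blast
qed

lemma fst_sh[simp]: "fst (sh v) = Suc (fst v)" by (simp add: sh_def)
lemma snd_sh[simp]: "snd (sh v) = snd v" by (simp add: sh_def)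
lemma sh_neq[simp]: "sh v \<noteq> v" by (cases v) (simp add: sh_def)
lemma notPair0[simp]: "fst w \<noteq> 0 \<Longrightarrow> w \<notin> Pair 0 ` A" by auto
lemma sh_not_Pair0[simp]: "sh v \<notin> Pair 0 ` A" by (auto simp: sh_def)
lemma sh_not_lift[simp]: "sh v \<notin># lift M" using lift_mem[of "sh v" M] by auto
lemma sh_eq: "sh v = w \<longleftrightarrow> fst w \<noteq> 0 \<and> v = (fst w - 1, snd w)"
  by (cases v; cases w) (auto simp: sh_def)

lemma dz_supp:
  assumes "dz f (E, Q) \<noteq> 0"
  shows "finite Q \<and> ((\<exists>v. sh v \<in># E \<and> f (add_mset v (E - {#sh v#}), Q) \<noteq> 0) \<or>
     (\<exists>v. sh v \<in> Q \<and> v \<notin> Q - {sh v} \<and> f (E, insert v (Q - {sh v})) \<noteq> 0))"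
proof -
  from assms obtain v where nz: "(if finite Q \<and> sh v \<in># E then pe v f (E - {#sh v#}, Q) else 0)
   + (if finite Q \<and> sh v \<in> Q then ksign {sh v} (Q - {sh v}) * po v f (E, Q - {sh v}) else 0) \<noteq> 0"
    unfolding dz_eq using infsum_nz by blast
  show ?thesis
  proof (cases "(if finite Q \<and> sh v \<in># E then pe v f (E - {#sh v#}, Q) else 0) \<noteq> 0")
    case True
    then have "finite Q" "sh v \<in># E" "pe v f (E - {#sh v#}, Q) \<noteq> 0" by (auto split: if_splits)
    moreover from this(3) have "f (add_mset v (E - {#sh v#}), Q) \<noteq> 0" by (simp add: pe_app)
    ultimately show ?thesis by blast
  next
    case False
    with nz have "(if finite Q \<and> sh v \<in> Q then ksign {sh v} (Q - {sh v}) * po v f (E, Q - {sh v}) else 0) \<noteq> 0"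
      by simp
    then have "finite Q" "sh v \<in> Q" "po v f (E, Q - {sh v}) \<noteq> 0" by (auto split: if_splits)
    moreover from this(3) have "v \<notin> Q - {sh v}" "f (E, insert v (Q - {sh v})) \<noteq> 0"
      unfolding po_app by (auto split: if_splits)
    ultimately show ?thesis by blast
  qed
qed

lemma dz_single:
  assumes "\<And>v. v \<noteq> v0 \<Longrightarrow> (if finite Q \<and> sh v \<in># E then pe v f (E - {#sh v#}, Q) else 0)
   + (if finite Q \<and> sh v \<in> Q then ksign {sh v} (Q - {sh v}) * po v f (E, Q - {sh v}) else 0) = 0"
  shows "dz f (E, Q) = (if finite Q \<and> sh v0 \<in># E then pe v0 f (E - {#sh v0#}, Q) else 0)
   + (if finite Q \<and> sh v0 \<in> Q then ksign {sh v0} (Q - {sh v0}) * po v0 f (E, Q - {sh v0}) else 0)"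
  unfolding dz_eq by (rule infsum_single_nz) (rule assms)

lemma dzA_I:
  assumes "fst w = 1"
  shows "dz (vd b (LH c)) (lift M, {w}) = dcorr c {#snd w, (b, 0)#} M"
proof -
  let ?v0 = "(0::nat, snd w)"
  have w: "w = sh ?v0" using assms by (simp add: prod_eq_iff)
  have "dz (vd b (LH c)) (lift M, {w}) = ksign {sh ?v0} ({w} - {sh ?v0}) * po ?v0 (vd b (LH c)) (lift M, {w} - {sh ?v0})"
  proof -
    have "dz (vd b (LH c)) (lift M, {w}) = (if finite {w} \<and> sh ?v0 \<in># lift M then pe ?v0 (vd b (LH c)) (lift M - {#sh ?v0#}, {w}) else 0)
     + (if finite {w} \<and> sh ?v0 \<in> {w} then ksign {sh ?v0} ({w} - {sh ?v0}) * po ?v0 (vd b (LH c)) (lift M, {w} - {sh ?v0}) else 0)"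
    proof (rule dz_single)
      fix v assume "v \<noteq> ?v0"
      then have "sh v \<noteq> w" using assms by (auto simp: sh_eq)
      then show "(if finite {w} \<and> sh v \<in># lift M then pe v (vd b (LH c)) (lift M - {#sh v#}, {w}) else 0)
       + (if finite {w} \<and> sh v \<in> {w} then ksign {sh v} ({w} - {sh v}) * po v (vd b (LH c)) (lift M, {w} - {sh v}) else 0) = 0"
        by simp
    qed
    then show ?thesis using w assms by simp
  qed
  also have "\<dots> = vd b (LH c) (lift M, {?v0})"
    using w by (simp add: po_app)
  also have "\<dots> = dcorr c {#snd w, (b, 0)#} M"
    by (simp add: A_val)
  finally show ?thesis .
qed

lemma dzA_II:
  assumes "fst u = 0"
  shows "dz (vd b (LH c)) (add_mset (1, z) (lift M), {u}) = dcorr c {#snd u, (b, 0), z#} M"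
proof -
  let ?v0 = "(0::nat, z)"
  have s: "sh ?v0 = (1, z)" by (simp add: sh_def)
  have u: "sh v \<noteq> u" for v using assms by (auto dest: arg_cong[where f=fst])
  have "dz (vd b (LH c)) (add_mset (1, z) (lift M), {u}) = pe ?v0 (vd b (LH c)) (lift M, {u})"
  proof -
    have "dz (vd b (LH c)) (add_mset (1, z) (lift M), {u}) = (if finite {u} \<and> sh ?v0 \<in># add_mset (1, z) (lift M) then pe ?v0 (vd b (LH c)) (add_mset (1, z) (lift M) - {#sh ?v0#}, {u}) else 0)
     + (if finite {u} \<and> sh ?v0 \<in> {u} then ksign {sh ?v0} ({u} - {sh ?v0}) * po ?v0 (vd b (LH c)) (add_mset (1, z) (lift M), {u} - {sh ?v0}) else 0)"
    proof (rule dz_single)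
      fix v assume "v \<noteq> ?v0"
      then have "sh v \<noteq> (1, z)" by (auto simp: sh_eq)
      then show "(if finite {u} \<and> sh v \<in># add_mset (1, z) (lift M) then pe v (vd b (LH c)) (add_mset (1, z) (lift M) - {#sh v#}, {u}) else 0)
       + (if finite {u} \<and> sh v \<in> {u} then ksign {sh v} ({u} - {sh v}) * po v (vd b (LH c)) (add_mset (1, z) (lift M), {u} - {sh v}) else 0) = 0"
        using u by simp
    qed
    moreover have "(Suc 0, z) \<noteq> u" using assms by auto
    ultimately show ?thesis using s u by simp
  qed
  also have "\<dots> = of_nat (count M z + 1) * vd b (LH c) (lift (add_mset z M), {u})"
    by (simp add: pe_app count_lift)
  also have "\<dots> = of_nat (count M z + 1) * dcorr c {#snd u, (b, 0)#} (add_mset z M)"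
    using assms by (simp only: A_val) simp
  also have "\<dots> = dcorr c {#snd u, (b, 0), z#} M"
    by (simp only: dcorr_add add_mset_commute)
  finally show ?thesis .
qed


definition caseI :: "'i var multiset \<Rightarrow> 'i var set \<Rightarrow> bool" where
  "caseI E Q \<longleftrightarrow> (\<exists>M u w. E = lift M \<and> Q = {u, w} \<and> fst u = 0 \<and> fst w = 1)"

definition caseII :: "'i var multiset \<Rightarrow> 'i var set \<Rightarrow> bool" where
  "caseII E Q \<longleftrightarrow> (\<exists>M z u w. E = add_mset (1, z) (lift M) \<and> Q = {u, w} \<and> u \<noteq> w \<and> fst u = 0 \<and> fst w = 0)"

lemma lift_decomp:
  assumes "sh v \<in># E" "add_mset v (E - {#sh v#}) = lift M'"
  shows "E = add_mset (1, snd v) (lift (M' - {#snd v#}))" "fst v = 0"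
proof -
  have "v \<in># add_mset v (E - {#sh v#})" by simp
  then have "v \<in># lift M'" unfolding assms(2) .
  then show f: "fst v = 0" by (rule lift_mem)
  then have v: "v = (0, snd v)" by (simp add: prod_eq_iff)
  have "E - {#sh v#} = add_mset v (E - {#sh v#}) - {#v#}" by simp
  also have "\<dots> = lift M' - {#v#}" unfolding assms(2) ..
  also have "\<dots> = lift (M' - {#snd v#})" by (subst v) (rule lift_minus)
  finally have ee: "E - {#sh v#} = lift (M' - {#snd v#})" .
  have "E = add_mset (sh v) (E - {#sh v#})" using assms(1) by (rule insert_DiffM[symmetric])
  then have "E = add_mset (sh v) (lift (M' - {#snd v#}))" unfolding ee .
  moreover have "sh v = (1, snd v)" using f by (simp add: sh_def)
  ultimately show "E = add_mset (1, snd v) (lift (M' - {#snd v#}))" by simp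
qed

lemma dzA_supp:
  assumes "dz (vd b (LH c)) (E, Q) \<noteq> 0"
  shows "(\<exists>M w. E = lift M \<and> Q = {w} \<and> fst w = 1) \<or> (\<exists>M z u. E = add_mset (1, z) (lift M) \<and> Q = {u} \<and> fst u = 0)"
proof -
  from dz_supp[OF assms] have
    "(\<exists>v. sh v \<in># E \<and> vd b (LH c) (add_mset v (E - {#sh v#}), Q) \<noteq> 0) \<or>
     (\<exists>v. sh v \<in> Q \<and> v \<notin> Q - {sh v} \<and> vd b (LH c) (E, insert v (Q - {sh v})) \<noteq> 0)" by blast
  then show ?thesis
  proof
    assume "\<exists>v. sh v \<in># E \<and> vd b (LH c) (add_mset v (E - {#sh v#}), Q) \<noteq> 0"
    then obtain v where v: "sh v \<in># E" "vd b (LH c) (add_mset v (E - {#sh v#}), Q) \<noteq> 0" by blast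
    from A_supp[OF v(2)] obtain M' u where "add_mset v (E - {#sh v#}) = lift M'" "Q = {u}" "fst u = 0" by blast
    with lift_decomp[OF v(1)] show ?thesis by blast
  next
    assume "\<exists>v. sh v \<in> Q \<and> v \<notin> Q - {sh v} \<and> vd b (LH c) (E, insert v (Q - {sh v})) \<noteq> 0"
    then obtain v where v: "sh v \<in> Q" "v \<notin> Q - {sh v}" "vd b (LH c) (E, insert v (Q - {sh v})) \<noteq> 0" by blast
    from A_supp[OF v(3)] obtain M u where e: "E = lift M" "insert v (Q - {sh v}) = {u}" "fst u = 0" by blast
    then have "v = u" by auto
    then have "Q - {sh v} = {}" using e(2) v(2) by auto
    then have "Q = {sh v}" using v(1) by auto
    moreover have "fst (sh v) = 1" using e(3) \<open>v = u\<close> by simp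
    ultimately show ?thesis using e(1) by blast
  qed
qed

definition NN :: "'i::linorder corr \<Rightarrow> 'i ser" where
  "NN c N = (if (\<forall>v\<in>#fst N. fst v = 0) \<and> card (snd N) = 2 \<and> (\<forall>v\<in>snd N. fst v = 0) then
     (1/2) * (\<Sum>u\<in>snd N. \<Sum>w\<in>snd N. if vless u w then
        dcorr c {#ip (snd u), snd w#} (image_mset snd (fst N)) - dcorr c {#ip (snd w), snd u#} (image_mset snd (fst N)) else 0)
     else 0)"

definition sg :: "'i::linorder var \<Rightarrow> 'i var \<Rightarrow> complex" where
  "sg u w = (if vless u w then 1 else -1)"

lemma NN_val:
  assumes "u \<noteq> w" "fst u = 0" "fst w = 0"
  shows "NN c (lift M, {u, w}) = 1/2 * sg u w * (dcorr c {#ip (snd u), snd w#} M - dcorr c {#ip (snd w), snd u#} M)"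
proof -
  have "card {u, w} = 2" using assms by simp
  then have "NN c (lift M, {u, w}) = (1/2) * ((if vless u w then dcorr c {#ip (snd u), snd w#} M - dcorr c {#ip (snd w), snd u#} M else 0)
     + (if vless w u then dcorr c {#ip (snd w), snd u#} M - dcorr c {#ip (snd u), snd w#} M else 0))"
    using assms by (simp add: NN_def)
  then show ?thesis using vless_total[OF assms(1)] vless_asym[of u w]
    by (auto simp: sg_def)
qed

lemma NN_supp:
  assumes "NN c (E, Q) \<noteq> 0"
  shows "\<exists>M u w. E = lift M \<and> Q = {u, w} \<and> u \<noteq> w \<and> fst u = 0 \<and> fst w = 0"
proof -
  from assms have z: "\<forall>v\<in>#E. fst v = 0" and c2: "card Q = 2" and f: "\<forall>v\<in>Q. fst v = 0"
    by (auto simp: NN_def split: if_splits)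
  from c2 obtain u w where "Q = {u, w}" "u \<noteq> w" by (auto simp: card_2_iff)
  with z f z0_lift[OF z] show ?thesis by blast
qed

lemma ksign_sg: "u \<noteq> w \<Longrightarrow> ksign {u} {w} = sg u w"
  using vless_total[of u w] vless_asym[of u w] by (auto simp: ksign_single sg_def)

lemma sg_swap: "u \<noteq> w \<Longrightarrow> sg w u = - sg u w"
  using vless_total[of u w] vless_asym[of u w] by (auto simp: sg_def)

lemma ring_helper2: "(K::complex) * (h * S * D) = (K * S) * (h * D)"
  by (simp add: algebra_simps)

lemma dzN_I:
  assumes "fst u = 0" "fst w = 1"
  shows "dz (NN c) (lift M, {u, w}) = 1/2 * (dcorr c {#ip (snd u), snd w#} M - dcorr c {#ip (snd w), snd u#} M)"
proof -
  let ?v0 = "(0::nat, snd w)"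
  have s: "sh ?v0 = w" using assms by (simp add: prod_eq_iff)
  have uw: "u \<noteq> w" using assms by auto
  have su: "sh v \<noteq> u" for v using assms(1) by (auto dest: arg_cong[where f=fst])
  have "dz (NN c) (lift M, {u, w}) = (if finite {u, w} \<and> sh ?v0 \<in># lift M then pe ?v0 (NN c) (lift M - {#sh ?v0#}, {u, w}) else 0)
     + (if finite {u, w} \<and> sh ?v0 \<in> {u, w} then ksign {sh ?v0} ({u, w} - {sh ?v0}) * po ?v0 (NN c) (lift M, {u, w} - {sh ?v0}) else 0)"
  proof (rule dz_single)
    fix v assume "v \<noteq> ?v0"
    then have "sh v \<noteq> w" using assms by (auto simp: sh_eq)
    then show "(if finite {u, w} \<and> sh v \<in># lift M then pe v (NN c) (lift M - {#sh v#}, {u, w}) else 0)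
       + (if finite {u, w} \<and> sh v \<in> {u, w} then ksign {sh v} ({u, w} - {sh v}) * po v (NN c) (lift M, {u, w} - {sh v}) else 0) = 0"
      using su by simp
  qed
  also have "\<dots> = ksign {w} {u} * po ?v0 (NN c) (lift M, {u})"
    using s uw assms by (simp add: insert_Diff_if)
  also have "\<dots> = 1/2 * (dcorr c {#ip (snd u), snd w#} M - dcorr c {#ip (snd w), snd u#} M)"
  proof (cases "?v0 = u")
    case True
    then have "snd u = snd w" by auto
    then show ?thesis using True by (simp add: po_app)
  next
    case False
    have k1: "ksign {w} {u} = -1" using assms by (simp add: ksign_single vless_fst)
    have "po ?v0 (NN c) (lift M, {u}) = ksign {?v0} {u} * NN c (lift M, {?v0, u})"
      using False by (simp add: po_app)
    also have "\<dots> = ksign {?v0} {u} * (1/2 * sg ?v0 u * (dcorr c {#ip (snd w), snd u#} M - dcorr c {#ip (snd u), snd w#} M))"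
      using False assms by (simp add: NN_val)
    also have "ksign {?v0} {u} * sg ?v0 u = 1"
      using False vless_total[of ?v0 u] vless_asym[of ?v0 u] by (auto simp: ksign_single sg_def)
    ultimately have "po ?v0 (NN c) (lift M, {u}) = (ksign {?v0} {u} * sg ?v0 u) * (1/2 * (dcorr c {#ip (snd w), snd u#} M - dcorr c {#ip (snd u), snd w#} M))"
      by (simp only: ring_helper2)
    then have "po ?v0 (NN c) (lift M, {u}) = 1/2 * (dcorr c {#ip (snd w), snd u#} M - dcorr c {#ip (snd u), snd w#} M)"
      using \<open>ksign {?v0} {u} * sg ?v0 u = 1\<close> by simp
    then show ?thesis using k1 by (simp add: algebra_simps)
  qed
  finally show ?thesis .
qed

lemma ring_helper: "(k::complex) * (h * s * (A - B)) = h * s * (k * A - k * B)"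
  by (simp add: algebra_simps)

lemma dzN_II:
  assumes "u \<noteq> w" "fst u = 0" "fst w = 0"
  shows "dz (NN c) (add_mset (1, z) (lift M), {u, w}) = 1/2 * sg u w * (dcorr c {#ip (snd u), snd w, z#} M - dcorr c {#ip (snd w), snd u, z#} M)"
proof -
  let ?v0 = "(0::nat, z)"
  have s: "sh ?v0 = (1, z)" by (simp add: sh_def)
  have su: "sh v \<noteq> u" "sh v \<noteq> w" for v using assms by (auto simp: prod_eq_iff dest: arg_cong[where f=fst])
  have "dz (NN c) (add_mset (1, z) (lift M), {u, w}) = (if finite {u, w} \<and> sh ?v0 \<in># add_mset (1, z) (lift M) then pe ?v0 (NN c) (add_mset (1, z) (lift M) - {#sh ?v0#}, {u, w}) else 0)
     + (if finite {u, w} \<and> sh ?v0 \<in> {u, w} then ksign {sh ?v0} ({u, w} - {sh ?v0}) * po ?v0 (NN c) (add_mset (1, z) (lift M), {u, w} - {sh ?v0}) else 0)"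
  proof (rule dz_single)
    fix v assume "v \<noteq> ?v0"
    then have "sh v \<noteq> (1, z)" by (auto simp: sh_eq)
    then show "(if finite {u, w} \<and> sh v \<in># add_mset (1, z) (lift M) then pe v (NN c) (add_mset (1, z) (lift M) - {#sh v#}, {u, w}) else 0)
       + (if finite {u, w} \<and> sh v \<in> {u, w} then ksign {sh v} ({u, w} - {sh v}) * po v (NN c) (add_mset (1, z) (lift M), {u, w} - {sh v}) else 0) = 0"
      using su by simp
  qed
  also have "\<dots> = pe ?v0 (NN c) (lift M, {u, w})"
  proof -
    have "(Suc 0, z) \<noteq> u" "(Suc 0, z) \<noteq> w" using assms by auto
    then show ?thesis using s by simp
  qed
  also have "\<dots> = of_nat (count M z + 1) * NN c (lift (add_mset z M), {u, w})"
    by (simp add: pe_app count_lift)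
  also have "\<dots> = 1/2 * sg u w * (of_nat (count M z + 1) * dcorr c {#ip (snd u), snd w#} (add_mset z M)
       - of_nat (count M z + 1) * dcorr c {#ip (snd w), snd u#} (add_mset z M))"
    by (subst NN_val[OF assms]) (rule ring_helper)
  also have "\<dots> = 1/2 * sg u w * (dcorr c {#ip (snd u), snd w, z#} M - dcorr c {#ip (snd w), snd u, z#} M)"
    by (simp only: dcorr_add add_mset_commute)
  finally show ?thesis .
qed

lemma dzN_supp:
  assumes "dz (NN c) (E, Q) \<noteq> 0"
  shows "caseI E Q \<or> caseII E Q"
proof -
  from dz_supp[OF assms] have
    "(\<exists>v. sh v \<in># E \<and> NN c (add_mset v (E - {#sh v#}), Q) \<noteq> 0) \<or>
     (\<exists>v. sh v \<in> Q \<and> v \<notin> Q - {sh v} \<and> NN c (E, insert v (Q - {sh v})) \<noteq> 0)" by blast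
  then show ?thesis
  proof
    assume "\<exists>v. sh v \<in># E \<and> NN c (add_mset v (E - {#sh v#}), Q) \<noteq> 0"
    then obtain v where v: "sh v \<in># E" "NN c (add_mset v (E - {#sh v#}), Q) \<noteq> 0" by blast
    from NN_supp[OF v(2)] obtain M' u w where "add_mset v (E - {#sh v#}) = lift M'" "Q = {u, w}" "u \<noteq> w" "fst u = 0" "fst w = 0" by blast
    with lift_decomp[OF v(1)] show ?thesis unfolding caseII_def by blast
  next
    assume "\<exists>v. sh v \<in> Q \<and> v \<notin> Q - {sh v} \<and> NN c (E, insert v (Q - {sh v})) \<noteq> 0"
    then obtain v where v: "sh v \<in> Q" "v \<notin> Q - {sh v}" "NN c (E, insert v (Q - {sh v})) \<noteq> 0" by blast
    from NN_supp[OF v(3)] obtain M u w where e: "E = lift M" "insert v (Q - {sh v}) = {u, w}" "u \<noteq> w" "fst u = 0" "fst w = 0" by blast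
    have "Q - {sh v} = insert v (Q - {sh v}) - {v}" using v(2) by (rule Diff_insert_absorb[symmetric])
    also have "\<dots> = {u, w} - {v}" unfolding e(2) ..
    finally have q1: "Q - {sh v} = {u, w} - {v}" .
    have Qe: "Q = insert (sh v) ({u, w} - {v})"
      using v(1) q1 by (metis insert_Diff)
    have "v \<in> {u, w}" using e(2) by (metis insertI1)
    then have "v = u \<or> v = w" by simp
    then show ?thesis
    proof
      assume vu: "v = u"
      have "{u, w} - {v} = {w}" using vu e(3) by auto
      then have "Q = {w, sh v}" using Qe by (simp add: insert_commute)
      moreover have "fst (sh v) = 1" using vu e(4) by simp
      ultimately show ?thesis using e(1) e(5) unfolding caseI_def by blast
    next
      assume vw: "v = w"
      have "{u, w} - {v} = {u}" using vw e(3) by auto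
      then have "Q = {u, sh v}" using Qe by (simp add: insert_commute)
      moreover have "fst (sh v) = 1" using vw e(5) by simp
      ultimately show ?thesis using e(1) e(4) unfolding caseI_def by blast
    qed
  qed
qed

definition dw :: "'i var \<Rightarrow> 'i var" where
  "dw v = (Suc (fst v), fst (snd v), snd (snd v) - 1)"

lemma delta_eq2: "delta f (E,Q) = infsum (\<lambda>v.
   if 1 \<le> snd (snd v) \<and> finite Q \<and> dw v \<in> Q then ksign {dw v} (Q - {dw v}) * pe v f (E, Q - {dw v}) else 0) UNIV"
  unfolding delta_eq dw_def by (intro arg_cong[where f="\<lambda>h. infsum h UNIV"] ext) (auto split: prod.splits)

lemma delta_I:
  assumes "fst u = 0" "fst w = 1"
  shows "delta (LH c) (lift M, {u, w}) = - dcorr c {#snd u, ip (snd w)#} M"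
proof -
  let ?v0 = "(0::nat, fst (snd w), Suc (snd (snd w)))"
  have dw0: "dw ?v0 = w" using assms by (simp add: dw_def prod_eq_iff)
  have uw: "u \<noteq> w" using assms by auto
  have du: "dw v \<noteq> u" for v
  proof
    assume "dw v = u"
    then have "fst (dw v) = fst u" by simp
    then show False using assms(1) by (simp add: dw_def)
  qed
  have "delta (LH c) (lift M, {u, w}) =
     (if 1 \<le> snd (snd ?v0) \<and> finite {u, w} \<and> dw ?v0 \<in> {u, w} then ksign {dw ?v0} ({u, w} - {dw ?v0}) * pe ?v0 (LH c) (lift M, {u, w} - {dw ?v0}) else 0)"
    unfolding delta_eq2
  proof (rule infsum_single_nz)
    fix v assume nv: "v \<noteq> ?v0"
    have "\<not> (1 \<le> snd (snd v) \<and> dw v = w)"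
    proof
      assume a: "1 \<le> snd (snd v) \<and> dw v = w"
      obtain m a k where vv: "v = (m, a, k)" by (cases v) auto
      have "(Suc m, a, k - 1) = w" using a vv by (simp add: dw_def)
      then have "m = 0" "fst (snd w) = a" "snd (snd w) = k - 1" using assms(2) by auto
      then have "v = ?v0" using a vv by simp
      with nv show False by simp
    qed
    then show "(if 1 \<le> snd (snd v) \<and> finite {u, w} \<and> dw v \<in> {u, w} then ksign {dw v} ({u, w} - {dw v}) * pe v (LH c) (lift M, {u, w} - {dw v}) else 0) = 0"
      using du by auto
  qed
  also have "\<dots> = ksign {w} {u} * pe ?v0 (LH c) (lift M, {u})"
    using dw0 uw by (simp add: insert_Diff_if)
  also have "\<dots> = - (of_nat (count M (snd ?v0) + 1) * dcorr c {#snd u#} (add_mset (snd ?v0) M))"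
    using assms LH_val[of c "add_mset (snd ?v0) M" u] by (simp add: ksign_single vless_fst pe_app count_lift)
  also have "\<dots> = - dcorr c {#snd u, ip (snd w)#} M"
    by (simp only: dcorr_add add_mset_commute) (simp add: ip_def)
  finally show ?thesis .
qed

lemma delta_supp:
  assumes "delta (LH c) (E, Q) \<noteq> 0"
  shows "caseI E Q"
proof -
  from assms obtain v where nz: "(if 1 \<le> snd (snd v) \<and> finite Q \<and> dw v \<in> Q then ksign {dw v} (Q - {dw v}) * pe v (LH c) (E, Q - {dw v}) else 0) \<noteq> 0"
    unfolding delta_eq2 using infsum_nz by blast
  have v1: "dw v \<in> Q"
  proof (rule ccontr)
    assume "dw v \<notin> Q" then show False using nz by simp
  qed
  have v2: "pe v (LH c) (E, Q - {dw v}) \<noteq> 0"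
  proof
    assume a: "pe v (LH c) (E, Q - {dw v}) = 0"
    have "(if 1 \<le> snd (snd v) \<and> finite Q \<and> dw v \<in> Q then ksign {dw v} (Q - {dw v}) * pe v (LH c) (E, Q - {dw v}) else 0) = 0"
      by (simp only: a mult_zero_right if_cancel)
    with nz show False by (simp only: not_True_eq_False)
  qed
  note v = v1 v2
  then have "LH c (add_mset v E, Q - {dw v}) \<noteq> 0" by (simp add: pe_app)
  from LH_supp[OF this] obtain M' u where e: "add_mset v E = lift M'" "Q - {dw v} = {u}" "fst u = 0" by blast
  have "v \<in># add_mset v E" by simp
  then have "v \<in># lift M'" unfolding e(1) .
  then have f: "fst v = 0" by (rule lift_mem)
  then have vv: "v = (0, snd v)" by (simp add: prod_eq_iff)
  have "E = add_mset v E - {#v#}" by simp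
  also have "\<dots> = lift M' - {#v#}" unfolding e(1) ..
  also have "\<dots> = lift (M' - {#snd v#})" by (subst vv) (rule lift_minus)
  finally have "E = lift (M' - {#snd v#})" .
  moreover have "Q = {u, dw v}"
  proof -
    have "Q = insert (dw v) (Q - {dw v})" using v(1) by (rule insert_Diff[symmetric])
    then have "Q = insert (dw v) {u}" unfolding e(2) .
    then show ?thesis by (simp add: insert_commute)
  qed
  moreover have "fst (dw v) = 1" using f by (simp add: dw_def)
  ultimately show ?thesis unfolding caseI_def using e(3) by blast
qed


section \<open>Part 4a: convolution\<close>

definition conv :: "('a multiset \<Rightarrow> complex) \<Rightarrow> ('a multiset \<Rightarrow> complex) \<Rightarrow> 'a multiset \<Rightarrow> complex" where
  "conv f g M = (\<Sum>M1\<in>{M1. M1 \<subseteq># M}. f M1 * g (M - M1))"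

lemma msub_diff_diff: "M1 \<subseteq># M \<Longrightarrow> M - (M - M1) = M1"
  by (simp add: multiset_eq_iff subseteq_mset_def)

lemma conv_swap: "conv f g M = conv g f M"
  unfolding conv_def
proof (rule sum.reindex_bij_witness[where i="\<lambda>M1. M - M1" and j="\<lambda>M1. M - M1"])
  fix a assume "a \<in> {M1. M1 \<subseteq># M}"
  then show "M - (M - a) = a" "M - a \<in> {M1. M1 \<subseteq># M}" by (simp_all add: msub_diff_diff)
next
  fix a assume a: "a \<in> {M1. M1 \<subseteq># M}"
  then show "M - (M - a) = a" "M - a \<in> {M1. M1 \<subseteq># M}" by (simp_all add: msub_diff_diff)
  show "g (M - a) * f (M - (M - a)) = f a * g (M - a)" using a by (simp add: msub_diff_diff)
qed

lemma add_diff_swap: "B \<subseteq># A \<Longrightarrow> add_mset x A - B = add_mset x (A - B)"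
  unfolding subseteq_mset_def multiset_eq_iff by (auto simp: Suc_diff_le)

lemma conv_leibniz:
  "of_nat (count M z + 1) * conv f g (add_mset z M) =
   conv (\<lambda>N. of_nat (count N z + 1) * f (add_mset z N)) g M + conv f (\<lambda>N. of_nat (count N z + 1) * g (add_mset z N)) M"
proof -
  let ?S = "{N. N \<subseteq># add_mset z M}"
  let ?A = "add_mset z M"
  have finS: "finite ?S" by (rule finite_submsets)
  have T1: "conv (\<lambda>N. of_nat (count N z + 1) * f (add_mset z N)) g M
      = (\<Sum>N\<in>?S. of_nat (count N z) * f N * g (?A - N))"
  proof -
    have "conv (\<lambda>N. of_nat (count N z + 1) * f (add_mset z N)) g M
        = (\<Sum>M1\<in>{M1. M1 \<subseteq># M}. of_nat (count (add_mset z M1) z) * f (add_mset z M1) * g (?A - add_mset z M1))"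
      unfolding conv_def by (rule sum.cong) (simp_all add: algebra_simps)
    also have "\<dots> = (\<Sum>N\<in>add_mset z ` {M1. M1 \<subseteq># M}. of_nat (count N z) * f N * g (?A - N))"
      by (subst sum.reindex) (auto simp: inj_on_def)
    also have "\<dots> = (\<Sum>N\<in>?S. of_nat (count N z) * f N * g (?A - N))"
    proof (rule sum.mono_neutral_left[OF finS])
      show "add_mset z ` {M1. M1 \<subseteq># M} \<subseteq> ?S" by auto
      show "\<forall>i\<in>?S - add_mset z ` {M1. M1 \<subseteq># M}. of_nat (count i z) * f i * g (?A - i) = 0"
      proof
        fix N assume N: "N \<in> ?S - add_mset z ` {M1. M1 \<subseteq># M}"
        have "z \<notin># N"
        proof
          assume zN: "z \<in># N"
          then have "N = add_mset z (N - {#z#})" by simp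
          moreover have "N - {#z#} \<subseteq># M" using N zN
            by (metis (no_types, lifting) DiffD1 insert_DiffM mem_Collect_eq mset_subset_eq_add_mset_cancel)
          ultimately show False using N by blast
        qed
        then show "of_nat (count N z) * f N * g (?A - N) = 0" by (simp add: not_in_iff)
      qed
    qed
    finally show ?thesis .
  qed
  have T2: "conv f (\<lambda>N. of_nat (count N z + 1) * g (add_mset z N)) M
      = (\<Sum>N\<in>?S. of_nat (count (?A - N) z) * f N * g (?A - N))"
  proof -
    have "conv f (\<lambda>N. of_nat (count N z + 1) * g (add_mset z N)) M
        = (\<Sum>N\<in>{M1. M1 \<subseteq># M}. of_nat (count (?A - N) z) * f N * g (?A - N))"
      unfolding conv_def by (rule sum.cong) (simp_all add: add_diff_swap algebra_simps)
    also have "\<dots> = (\<Sum>N\<in>?S. of_nat (count (?A - N) z) * f N * g (?A - N))"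
    proof (rule sum.mono_neutral_left[OF finS])
      show "{M1. M1 \<subseteq># M} \<subseteq> ?S" by (auto intro: subset_mset.order_trans)
      show "\<forall>i\<in>?S - {M1. M1 \<subseteq># M}. of_nat (count (?A - i) z) * f i * g (?A - i) = 0"
      proof
        fix N assume N: "N \<in> ?S - {M1. M1 \<subseteq># M}"
        then have s1: "\<forall>y. count N y \<le> count ?A y" and s2: "\<not> (\<forall>y. count N y \<le> count M y)"
          by (auto simp: subseteq_mset_def)
        then obtain y where y: "count N y > count M y" by (auto simp: not_le)
        have "y = z"
        proof (rule ccontr)
          assume "y \<noteq> z" then show False using s1[rule_format, of y] y by simp
        qed
        then have "count (?A - N) z = 0" using y s1[rule_format, of z] by simp
        then show "of_nat (count (?A - N) z) * f N * g (?A - N) = 0" by simp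
      qed
    qed
    finally show ?thesis .
  qed
  have "conv (\<lambda>N. of_nat (count N z + 1) * f (add_mset z N)) g M + conv f (\<lambda>N. of_nat (count N z + 1) * g (add_mset z N)) M
     = (\<Sum>N\<in>?S. (of_nat (count N z) + of_nat (count (?A - N) z)) * f N * g (?A - N))"
    unfolding T1 T2 sum.distrib[symmetric] by (rule sum.cong) (simp_all add: algebra_simps)
  also have "\<dots> = (\<Sum>N\<in>?S. of_nat (count M z + 1) * (f N * g (?A - N)))"
  proof (rule sum.cong)
    fix N assume "N \<in> ?S"
    then have "count N z \<le> count ?A z" by (simp only: mem_Collect_eq subseteq_mset_def)
    then have "count N z + count (?A - N) z = count M z + 1" by simp
    then have "(of_nat (count N z) + of_nat (count (?A - N) z) :: complex) = of_nat (count M z + 1)"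
      by (metis of_nat_add)
    then show "(of_nat (count N z) + of_nat (count (?A - N) z)) * f N * g (?A - N) = of_nat (count M z + 1) * (f N * g (?A - N))"
      by (simp only: mult.assoc)
  qed simp
  also have "\<dots> = of_nat (count M z + 1) * conv f g (add_mset z M)"
    unfolding conv_def by (simp add: sum_distrib_left)
  finally show ?thesis by simp
qed


section \<open>Part 4b: the bracket\<close>

lemma sum_single_in:
  assumes "finite S" "x \<in> S" "\<And>y. y \<in> S \<Longrightarrow> y \<noteq> x \<Longrightarrow> h y = (0::complex)"
  shows "sum h S = h x"
proof -
  have "sum h S = h x + sum h (S - {x})" using assms(1,2) by (rule sum.remove)
  moreover have "sum h (S - {x}) = 0" using assms(3) by (intro sum.neutral) auto
  ultimately show ?thesis by simp
qed

lemma sum_two_in: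
  assumes "finite S" "x \<in> S" "y \<in> S" "x \<noteq> y" "\<And>t. t \<in> S \<Longrightarrow> t \<noteq> x \<Longrightarrow> t \<noteq> y \<Longrightarrow> h t = (0::complex)"
  shows "sum h S = h x + h y"
proof -
  have "sum h S = sum h {x, y}"
    by (rule sum.mono_neutral_right) (use assms in auto)
  then show ?thesis using assms(4) by simp
qed

lemma smul_supp:
  assumes "smul f g (E, Q) \<noteq> 0"
  shows "finite Q \<and> (\<exists>E1 Q1. E1 \<subseteq># E \<and> Q1 \<subseteq> Q \<and> f (E1, Q1) \<noteq> 0 \<and> g (E - E1, Q - Q1) \<noteq> 0)"
proof -
  have fin: "finite Q"
  proof (rule ccontr)
    assume "infinite Q"
    then have "infinite (Pow Q)" by simp
    then have "smul f g (E, Q) = 0" by (simp add: smul_def)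
    with assms show False by simp
  qed
  from assms obtain E1 where E1: "E1 \<in> {E1. E1 \<subseteq># E}"
    and "(\<Sum>Q1\<in>Pow Q. ksign Q1 (Q - Q1) * f (E1, Q1) * g (E - E1, Q - Q1)) \<noteq> 0"
    unfolding smul_def by (auto elim: sum.not_neutral_contains_not_neutral)
  then obtain Q1 where Q1: "Q1 \<in> Pow Q" and "ksign Q1 (Q - Q1) * f (E1, Q1) * g (E - E1, Q - Q1) \<noteq> 0"
    by (auto elim: sum.not_neutral_contains_not_neutral)
  then have "f (E1, Q1) \<noteq> 0" "g (E - E1, Q - Q1) \<noteq> 0" by auto
  with E1 Q1 fin show ?thesis by blast
qed

lemma B_supp:
  assumes "smul (vd a (LH c)) (dz (vd b (LH c))) (E, Q) \<noteq> 0"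
  shows "caseI E Q \<or> caseII E Q"
proof -
  from smul_supp[OF assms] obtain E1 Q1 where s: "E1 \<subseteq># E" "Q1 \<subseteq> Q"
    and nz1: "vd a (LH c) (E1, Q1) \<noteq> 0" and nz2: "dz (vd b (LH c)) (E - E1, Q - Q1) \<noteq> 0" by blast
  from A_supp[OF nz1] obtain M1 u where e1: "E1 = lift M1" "Q1 = {u}" "fst u = 0" by blast
  have Ee: "E = E1 + (E - E1)" using s(1) by simp
  have Qe: "Q = Q1 \<union> (Q - Q1)" using s(2) by auto
  from dzA_supp[OF nz2] show ?thesis
  proof
    assume "\<exists>M w. E - E1 = lift M \<and> Q - Q1 = {w} \<and> fst w = 1"
    then obtain M2 w where e2: "E - E1 = lift M2" "Q - Q1 = {w}" "fst w = 1" by blast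
    have "E = E1 + lift M2" using Ee unfolding e2(1) .
    then have "E = lift M1 + lift M2" unfolding e1(1) .
    then have "E = lift (M1 + M2)" by simp
    moreover have "Q = Q1 \<union> {w}" using Qe unfolding e2(2) .
    then have "Q = {u} \<union> {w}" unfolding e1(2) .
    then have "Q = {u, w}" by (simp add: insert_commute)
    ultimately show ?thesis using e1(3) e2(3) unfolding caseI_def by blast
  next
    assume "\<exists>M z u. E - E1 = add_mset (1, z) (lift M) \<and> Q - Q1 = {u} \<and> fst u = 0"
    then obtain M2 z u' where e2: "E - E1 = add_mset (1, z) (lift M2)" "Q - Q1 = {u'}" "fst u' = 0" by blast
    have "E = E1 + add_mset (1, z) (lift M2)" using Ee unfolding e2(1) .
    then have "E = lift M1 + add_mset (1, z) (lift M2)" unfolding e1(1) .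
    then have "E = add_mset (1, z) (lift (M1 + M2))" by simp
    moreover have "Q = Q1 \<union> {u'}" using Qe unfolding e2(2) .
    then have "Q = {u} \<union> {u'}" unfolding e1(2) .
    then have "Q = {u, u'}" by (simp add: insert_commute)
    moreover have "u \<noteq> u'" using e1(2) e2(2) by auto
    ultimately show ?thesis using e1(3) e2(3) unfolding caseII_def by blast
  qed
qed

lemma submsets_lift: "{E1. E1 \<subseteq># lift M} = lift ` {M1. M1 \<subseteq># M}"
proof
  show "lift ` {M1. M1 \<subseteq># M} \<subseteq> {E1. E1 \<subseteq># lift M}"
  proof
    fix E1 assume "E1 \<in> lift ` {M1. M1 \<subseteq># M}"
    then obtain M1 where "E1 = lift M1" "M1 \<subseteq># M" by blast
    then show "E1 \<in> {E1. E1 \<subseteq># lift M}" using image_mset_subseteq_mono by blast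
  qed
  show "{E1. E1 \<subseteq># lift M} \<subseteq> lift ` {M1. M1 \<subseteq># M}"
  proof
    fix E1 assume "E1 \<in> {E1. E1 \<subseteq># lift M}"
    then have s: "E1 \<subseteq># lift M" by simp
    have "\<forall>v\<in>#E1. fst v = 0"
    proof
      fix v assume "v \<in># E1"
      then have "v \<in># lift M" by (rule mset_subset_eqD[OF s])
      then show "fst v = 0" by (rule lift_mem)
    qed
    then have "E1 = lift (image_mset snd E1)" by (rule z0_lift)
    moreover have "image_mset snd E1 \<subseteq># M"
      using image_mset_subseteq_mono[OF s, of snd] by simp
    ultimately show "E1 \<in> lift ` {M1. M1 \<subseteq># M}" by blast
  qed
qed

lemma inj_lift: "inj_on lift A"
  unfolding inj_on_def lift_inj by blast

lemma lift_diff: "M1 \<subseteq># M \<Longrightarrow> lift M - lift M1 = lift (M - M1)"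
  by (simp add: image_mset_Diff)

lemma B_I:
  assumes "fst u = 0" "fst w = 1"
  shows "smul (vd a (LH c)) (dz (vd b (LH c))) (lift M, {u, w}) =
    conv (dcorr c {#snd u, (a, 0)#}) (dcorr c {#snd w, (b, 0)#}) M"
proof -
  have uw: "u \<noteq> w" using assms by auto
  have inner: "(\<Sum>Q1\<in>Pow {u, w}. ksign Q1 ({u, w} - Q1) * vd a (LH c) (E1, Q1) * dz (vd b (LH c)) (lift M - E1, {u, w} - Q1))
      = vd a (LH c) (E1, {u}) * dz (vd b (LH c)) (lift M - E1, {w})" for E1
  proof -
    have "(\<Sum>Q1\<in>Pow {u, w}. ksign Q1 ({u, w} - Q1) * vd a (LH c) (E1, Q1) * dz (vd b (LH c)) (lift M - E1, {u, w} - Q1))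
      = ksign {u} ({u, w} - {u}) * vd a (LH c) (E1, {u}) * dz (vd b (LH c)) (lift M - E1, {u, w} - {u})"
    proof (rule sum_single_in)
      fix Q1 assume "Q1 \<in> Pow {u, w}" "Q1 \<noteq> {u}"
      show "ksign Q1 ({u, w} - Q1) * vd a (LH c) (E1, Q1) * dz (vd b (LH c)) (lift M - E1, {u, w} - Q1) = 0"
      proof (cases "vd a (LH c) (E1, Q1) = 0")
        case False
        from A_supp[OF this] obtain u' where "Q1 = {u'}" "fst u' = 0" by blast
        with \<open>Q1 \<in> Pow {u, w}\<close> \<open>Q1 \<noteq> {u}\<close> assms show ?thesis by auto
      qed simp
    qed auto
    moreover have "ksign {u} ({u, w} - {u}) = 1" "{u, w} - {u} = {w}"
      using uw assms by (auto simp: ksign_single vless_def)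
    ultimately show ?thesis by simp
  qed
  have "smul (vd a (LH c)) (dz (vd b (LH c))) (lift M, {u, w})
      = (\<Sum>E1\<in>{E1. E1 \<subseteq># lift M}. vd a (LH c) (E1, {u}) * dz (vd b (LH c)) (lift M - E1, {w}))"
    unfolding smul_def using inner by simp
  also have "\<dots> = (\<Sum>M1\<in>{M1. M1 \<subseteq># M}. vd a (LH c) (lift M1, {u}) * dz (vd b (LH c)) (lift M - lift M1, {w}))"
    unfolding submsets_lift by (subst sum.reindex[OF inj_lift]) simp
  also have "\<dots> = conv (dcorr c {#snd u, (a, 0)#}) (dcorr c {#snd w, (b, 0)#}) M"
    unfolding conv_def using assms by (intro sum.cong) (simp_all add: lift_diff A_val dzA_I)
  finally show ?thesis .
qed

lemma sub_add_notin: "N \<subseteq># add_mset x M \<Longrightarrow> x \<notin># N \<Longrightarrow> N \<subseteq># M"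
  by (simp add: inter_add_left1 subset_mset.inf.absorb_iff2)

lemma B_II:
  assumes "u \<noteq> w" "fst u = 0" "fst w = 0"
  shows "smul (vd a (LH c)) (dz (vd b (LH c))) (add_mset (1, z) (lift M), {u, w}) =
    sg u w * (conv (dcorr c {#snd u, (a, 0)#}) (dcorr c {#snd w, (b, 0), z#}) M
            - conv (dcorr c {#snd w, (a, 0)#}) (dcorr c {#snd u, (b, 0), z#}) M)"
proof -
  let ?E = "add_mset (1, z) (lift M)"
  let ?h = "\<lambda>E1 Q1. ksign Q1 ({u, w} - Q1) * vd a (LH c) (E1, Q1) * dz (vd b (LH c)) (?E - E1, {u, w} - Q1)"
  have inner: "(\<Sum>Q1\<in>Pow {u, w}. ?h E1 Q1) = ?h E1 {u} + ?h E1 {w}" for E1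
  proof (rule sum_two_in)
    fix Q1 assume "Q1 \<in> Pow {u, w}" "Q1 \<noteq> {u}" "Q1 \<noteq> {w}"
    show "?h E1 Q1 = 0"
    proof (cases "vd a (LH c) (E1, Q1) = 0")
      case False
      from A_supp[OF this] obtain u' where "Q1 = {u'}" by blast
      with \<open>Q1 \<in> Pow {u, w}\<close> \<open>Q1 \<noteq> {u}\<close> \<open>Q1 \<noteq> {w}\<close> show ?thesis by auto
    qed simp
  qed (use assms in auto)
  have "smul (vd a (LH c)) (dz (vd b (LH c))) (?E, {u, w}) = (\<Sum>E1\<in>{E1. E1 \<subseteq># ?E}. ?h E1 {u} + ?h E1 {w})"
    unfolding smul_def fst_conv snd_conv by (rule sum.cong[OF refl inner])
  also have "\<dots> = (\<Sum>E1\<in>{E1. E1 \<subseteq># lift M}. ?h E1 {u} + ?h E1 {w})"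
  proof (rule sum.mono_neutral_right)
    show "finite {E1. E1 \<subseteq># ?E}" by (rule finite_submsets)
    show "{E1. E1 \<subseteq># lift M} \<subseteq> {E1. E1 \<subseteq># ?E}"
    proof
      fix E1 assume "E1 \<in> {E1. E1 \<subseteq># lift M}"
      then have "E1 \<subseteq># lift M" by simp
      moreover have "lift M \<subseteq># ?E" by (simp add: subseteq_mset_def)
      ultimately have "E1 \<subseteq># ?E" by (rule subset_mset.order_trans)
      then show "E1 \<in> {E1. E1 \<subseteq># ?E}" by simp
    qed
    show "\<forall>i\<in>{E1. E1 \<subseteq># ?E} - {E1. E1 \<subseteq># lift M}. ?h i {u} + ?h i {w} = 0"
    proof
      fix E1 assume E1: "E1 \<in> {E1. E1 \<subseteq># ?E} - {E1. E1 \<subseteq># lift M}"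
      then have e12: "E1 \<subseteq># ?E \<and> \<not> E1 \<subseteq># lift M" by (simp only: Diff_iff mem_Collect_eq simp_thms)
      then have e1: "E1 \<subseteq># ?E" by (rule conjunct1)
      from e12 have e2: "\<not> E1 \<subseteq># lift M" by (rule conjunct2)
      have z: "vd a (LH c) (E1, Q1) = 0" for Q1
      proof (rule ccontr)
        assume "vd a (LH c) (E1, Q1) \<noteq> 0"
        from A_supp[OF this] obtain M1 where em1: "E1 = lift M1" by blast
        have "(1::nat, z) \<notin># lift M1" using lift_mem[of "(1, z)" M1] by auto
        then have "(1, z) \<notin># E1" unfolding em1 .
        from sub_add_notin[OF e1 this] e2 show False by contradiction
      qed
      show "?h E1 {u} + ?h E1 {w} = 0" by (simp only: z mult_zero_right mult_zero_left add_0)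
    qed
  qed
  also have "\<dots> = (\<Sum>M1\<in>{M1. M1 \<subseteq># M}. ?h (lift M1) {u} + ?h (lift M1) {w})"
    unfolding submsets_lift by (subst sum.reindex[OF inj_lift]) (simp only: comp_def)
  also have "\<dots> = (\<Sum>M1\<in>{M1. M1 \<subseteq># M}. sg u w * (dcorr c {#snd u, (a, 0)#} M1 * dcorr c {#snd w, (b, 0), z#} (M - M1))
       - sg u w * (dcorr c {#snd w, (a, 0)#} M1 * dcorr c {#snd u, (b, 0), z#} (M - M1)))"
  proof (rule sum.cong)
    fix M1 assume "M1 \<in> {M1. M1 \<subseteq># M}"
    then have "M1 \<subseteq># M" by simp
    then have em: "?E - lift M1 = add_mset (1, z) (lift (M - M1))"
      by (simp add: add_diff_swap image_mset_subseteq_mono lift_diff)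
    have d1: "{u, w} - {u} = {w}" "{u, w} - {w} = {u}" using assms(1) by auto
    have k1: "ksign {u} {w} = sg u w" using assms(1) by (rule ksign_sg)
    have "ksign {w} {u} = sg w u" using assms(1) by (intro ksign_sg) simp
    also have "\<dots> = - sg u w" using assms(1) by (rule sg_swap)
    finally have k2: "ksign {w} {u} = - sg u w" .
    note k = k1 k2
    show "?h (lift M1) {u} + ?h (lift M1) {w} = sg u w * (dcorr c {#snd u, (a, 0)#} M1 * dcorr c {#snd w, (b, 0), z#} (M - M1))
       - sg u w * (dcorr c {#snd w, (a, 0)#} M1 * dcorr c {#snd u, (b, 0), z#} (M - M1))"
      unfolding em d1 k dzA_II[OF assms(2)] dzA_II[OF assms(3)] using assms by (simp add: A_val algebra_simps)
  qed simp
  also have "\<dots> = sg u w * (conv (dcorr c {#snd u, (a, 0)#}) (dcorr c {#snd w, (b, 0), z#}) M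
            - conv (dcorr c {#snd w, (a, 0)#}) (dcorr c {#snd u, (b, 0), z#}) M)"
    unfolding conv_def by (simp only: sum_subtractf sum_distrib_left[symmetric] right_diff_distrib)
  finally show ?thesis .
qed


section \<open>Part 5: genus zero identities and the main theorem\<close>

lemma TRR_conv:
  assumes TRR: "\<forall>a b d i j k M.
      dcorr c {#(a, Suc i), (b, j), (d, k)#} M =
      (\<Sum>s\<in>UNIV. \<Sum>t\<in>UNIV. ginv c p s t *
         (\<Sum>M1\<in>{M1. M1 \<subseteq># M}. dcorr c {#(a, i), (t, 0)#} M1 * dcorr c {#(s, 0), (b, j), (d, k)#} (M - M1)))"
  shows "dcorr c {#ip x, y, z#} M = (\<Sum>s\<in>UNIV. \<Sum>t\<in>UNIV. ginv c p s t * conv (dcorr c {#x, (t, 0)#}) (dcorr c {#(s, 0), y, z#}) M)"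
proof -
  obtain a i where x: "x = (a, i)" by (cases x)
  obtain b j where y: "y = (b, j)" by (cases y)
  obtain d k where z: "z = (d, k)" by (cases z)
  show ?thesis unfolding x y z ip_def conv_def using TRR by simp
qed

lemma Dz_dcorr: "(\<lambda>N. of_nat (count N z + 1) * dcorr c X (add_mset z N)) = dcorr c (add_mset z X)"
  by (rule ext) (rule dcorr_add)

lemma dcorr_empty: "dcorr c X {#} = c X"
  by (simp add: dcorr_def mfact_def)

lemma conv_empty: "conv f g {#} = f {#} * g {#}"
proof -
  have "{M1. M1 \<subseteq># ({#}::'a multiset)} = {{#}}" by auto
  then show ?thesis by (simp add: conv_def)
qed

lemma TT:
  assumes TRR: "\<forall>a b d i j k M.
      dcorr c {#(a, Suc i), (b, j), (d, k)#} M =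
      (\<Sum>s\<in>UNIV. \<Sum>t\<in>UNIV. ginv c p s t *
         (\<Sum>M1\<in>{M1. M1 \<subseteq># M}. dcorr c {#(a, i), (t, 0)#} M1 * dcorr c {#(s, 0), (b, j), (d, k)#} (M - M1)))"
    and nondeg: "invertible (gmat c p)"
  shows "(\<Sum>a\<in>UNIV. \<Sum>b\<in>UNIV. ginv c p a b * conv (dcorr c {#x, (a, 0)#}) (dcorr c {#y, (b, 0), z#}) M)
     = dcorr c {#ip x, y, z#} M"
proof -
  have "(\<Sum>a\<in>UNIV. \<Sum>b\<in>UNIV. ginv c p a b * conv (dcorr c {#x, (a, 0)#}) (dcorr c {#y, (b, 0), z#}) M)
      = (\<Sum>s\<in>UNIV. \<Sum>t\<in>UNIV. ginv c p t s * conv (dcorr c {#x, (t, 0)#}) (dcorr c {#y, (s, 0), z#}) M)"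
    by (rule sum.swap)
  also have "\<dots> = (\<Sum>s\<in>UNIV. \<Sum>t\<in>UNIV. ginv c p s t * conv (dcorr c {#x, (t, 0)#}) (dcorr c {#(s, 0), y, z#}) M)"
  proof (intro sum.cong refl)
    fix s t
    have me: "{#y, (s, 0), z#} = {#(s, 0), y, z#}" by (simp add: add_mset_commute)
    show "ginv c p t s * conv (dcorr c {#x, (t, 0)#}) (dcorr c {#y, (s, 0), z#}) M
      = ginv c p s t * conv (dcorr c {#x, (t, 0)#}) (dcorr c {#(s, 0), y, z#}) M"
      unfolding me by (subst ginv_sym[OF nondeg, of t s]) (rule refl)
  qed
  also have "\<dots> = dcorr c {#ip x, y, z#} M"
    using TRR_conv[OF TRR] by simp
  finally show ?thesis .
qed

lemma two_point:
  assumes vanish: "\<forall>X. size X < 3 \<longrightarrow> c X = 0"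
    and TRR: "\<forall>a b d i j k M.
      dcorr c {#(a, Suc i), (b, j), (d, k)#} M =
      (\<Sum>s\<in>UNIV. \<Sum>t\<in>UNIV. ginv c p s t *
         (\<Sum>M1\<in>{M1. M1 \<subseteq># M}. dcorr c {#(a, i), (t, 0)#} M1 * dcorr c {#(s, 0), (b, j), (d, k)#} (M - M1)))"
    and nondeg: "invertible (gmat c p)"
  shows "dcorr c {#ip x, y#} M + dcorr c {#x, ip y#} M =
    (\<Sum>a\<in>UNIV. \<Sum>b\<in>UNIV. ginv c p a b * conv (dcorr c {#x, (a, 0)#}) (dcorr c {#y, (b, 0)#}) M)"
proof (cases "M = {#}")
  case True
  have "c {#ip x, y#} = 0" "c {#x, ip y#} = 0" "c {#x, (a, 0)#} = 0" for a
    using vanish by simp_all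
  then show ?thesis using True by (simp add: dcorr_empty conv_empty)
next
  case False
  then obtain z where "z \<in># M" by (meson multiset_nonemptyE)
  define M' where "M' = M - {#z#}"
  have M: "M = add_mset z M'" unfolding M'_def using \<open>z \<in># M\<close> by simp
  define k :: complex where "k = of_nat (count M' z + 1)"
  have k0: "k \<noteq> 0" unfolding k_def by (simp only: of_nat_eq_0_iff)
  have L: "k * (dcorr c {#ip x, y#} M + dcorr c {#x, ip y#} M) = dcorr c {#ip x, y, z#} M' + dcorr c {#ip y, x, z#} M'"
  proof -
    have "k * dcorr c {#ip x, y#} M = dcorr c {#ip x, y, z#} M'"
      unfolding M k_def dcorr_add by (simp add: add_mset_commute)
    moreover have "k * dcorr c {#x, ip y#} M = dcorr c {#ip y, x, z#} M'"
      unfolding M k_def dcorr_add by (simp add: add_mset_commute)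
    ultimately show ?thesis by (simp add: distrib_left)
  qed
  have R: "k * (\<Sum>a\<in>UNIV. \<Sum>b\<in>UNIV. ginv c p a b * conv (dcorr c {#x, (a, 0)#}) (dcorr c {#y, (b, 0)#}) M)
     = (\<Sum>a\<in>UNIV. \<Sum>b\<in>UNIV. ginv c p a b * conv (dcorr c {#y, (b, 0)#}) (dcorr c {#z, x, (a, 0)#}) M')
     + (\<Sum>a\<in>UNIV. \<Sum>b\<in>UNIV. ginv c p a b * conv (dcorr c {#x, (a, 0)#}) (dcorr c {#z, y, (b, 0)#}) M')"
  proof -
    have "k * (\<Sum>a\<in>UNIV. \<Sum>b\<in>UNIV. ginv c p a b * conv (dcorr c {#x, (a, 0)#}) (dcorr c {#y, (b, 0)#}) M)
      = (\<Sum>a\<in>UNIV. \<Sum>b\<in>UNIV. ginv c p a b * (k * conv (dcorr c {#x, (a, 0)#}) (dcorr c {#y, (b, 0)#}) M))"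
      by (simp add: sum_distrib_left mult_ac)
    also have "\<dots> = (\<Sum>a\<in>UNIV. \<Sum>b\<in>UNIV. ginv c p a b * conv (dcorr c {#y, (b, 0)#}) (dcorr c {#z, x, (a, 0)#}) M'
        + ginv c p a b * conv (dcorr c {#x, (a, 0)#}) (dcorr c {#z, y, (b, 0)#}) M')"
    proof (intro sum.cong refl)
      fix a b
      have "k * conv (dcorr c {#x, (a, 0)#}) (dcorr c {#y, (b, 0)#}) M
        = conv (dcorr c {#z, x, (a, 0)#}) (dcorr c {#y, (b, 0)#}) M' + conv (dcorr c {#x, (a, 0)#}) (dcorr c {#z, y, (b, 0)#}) M'"
        unfolding M k_def conv_leibniz Dz_dcorr ..
      then show "ginv c p a b * (k * conv (dcorr c {#x, (a, 0)#}) (dcorr c {#y, (b, 0)#}) M)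
        = ginv c p a b * conv (dcorr c {#y, (b, 0)#}) (dcorr c {#z, x, (a, 0)#}) M'
        + ginv c p a b * conv (dcorr c {#x, (a, 0)#}) (dcorr c {#z, y, (b, 0)#}) M'"
        by (simp add: distrib_left conv_swap[of "dcorr c {#z, x, (a, 0)#}"])
    qed
    also have "\<dots> = (\<Sum>a\<in>UNIV. \<Sum>b\<in>UNIV. ginv c p a b * conv (dcorr c {#y, (b, 0)#}) (dcorr c {#z, x, (a, 0)#}) M')
     + (\<Sum>a\<in>UNIV. \<Sum>b\<in>UNIV. ginv c p a b * conv (dcorr c {#x, (a, 0)#}) (dcorr c {#z, y, (b, 0)#}) M')"
      by (simp add: sum.distrib)
    finally show ?thesis .
  qed
  have R1: "(\<Sum>a\<in>UNIV. \<Sum>b\<in>UNIV. ginv c p a b * conv (dcorr c {#y, (b, 0)#}) (dcorr c {#z, x, (a, 0)#}) M')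
      = dcorr c {#ip y, x, z#} M'"
  proof -
    have "(\<Sum>a\<in>UNIV. \<Sum>b\<in>UNIV. ginv c p a b * conv (dcorr c {#y, (b, 0)#}) (dcorr c {#z, x, (a, 0)#}) M')
        = (\<Sum>a\<in>UNIV. \<Sum>b\<in>UNIV. ginv c p a b * conv (dcorr c {#y, (b, 0)#}) (dcorr c {#(a, 0), x, z#}) M')"
    proof (intro sum.cong refl)
      fix a b
      have me: "{#z, x, (a, 0)#} = {#(a, 0), x, z#}" by (simp add: add_mset_commute)
      show "ginv c p a b * conv (dcorr c {#y, (b, 0)#}) (dcorr c {#z, x, (a, 0)#}) M'
        = ginv c p a b * conv (dcorr c {#y, (b, 0)#}) (dcorr c {#(a, 0), x, z#}) M'" unfolding me ..
    qed
    also have "\<dots> = dcorr c {#ip y, x, z#} M'"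
      using TRR_conv[OF TRR, of y x z M'] by simp
    finally show ?thesis .
  qed
  have R2: "(\<Sum>a\<in>UNIV. \<Sum>b\<in>UNIV. ginv c p a b * conv (dcorr c {#x, (a, 0)#}) (dcorr c {#z, y, (b, 0)#}) M')
      = dcorr c {#ip x, y, z#} M'"
  proof -
    have "(\<Sum>a\<in>UNIV. \<Sum>b\<in>UNIV. ginv c p a b * conv (dcorr c {#x, (a, 0)#}) (dcorr c {#z, y, (b, 0)#}) M')
        = (\<Sum>a\<in>UNIV. \<Sum>b\<in>UNIV. ginv c p a b * conv (dcorr c {#x, (a, 0)#}) (dcorr c {#y, (b, 0), z#}) M')"
    proof (intro sum.cong refl)
      fix a b
      have me: "{#z, y, (b, 0)#} = {#y, (b, 0), z#}" by (simp add: add_mset_commute)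
      show "ginv c p a b * conv (dcorr c {#x, (a, 0)#}) (dcorr c {#z, y, (b, 0)#}) M'
        = ginv c p a b * conv (dcorr c {#x, (a, 0)#}) (dcorr c {#y, (b, 0), z#}) M'" unfolding me ..
    qed
    also have "\<dots> = dcorr c {#ip x, y, z#} M'"
      by (rule TT[OF TRR nondeg])
    finally show ?thesis .
  qed
  have "k * (dcorr c {#ip x, y#} M + dcorr c {#x, ip y#} M)
      = k * (\<Sum>a\<in>UNIV. \<Sum>b\<in>UNIV. ginv c p a b * conv (dcorr c {#x, (a, 0)#}) (dcorr c {#y, (b, 0)#}) M)"
    unfolding L R R1 R2 by simp
  then show ?thesis using k0 by simp
qed

theorem mainTheorem7:
  fixes c :: "('i::{finite,linorder} \<times> nat) multiset \<Rightarrow> complex" and p :: 'i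
  assumes vanish: "\<forall>X. size X < 3 \<longrightarrow> c X = 0"
    and nondeg: "invertible (gmat c p)"
    and TRR: "\<forall>a b d i j k M.
      dcorr c {#(a, Suc i), (b, j), (d, k)#} M =
      (\<Sum>s\<in>UNIV. \<Sum>t\<in>UNIV. ginv c p s t *
         (\<Sum>M1\<in>{M1. M1 \<subseteq># M}. dcorr c {#(a, i), (t, 0)#} M1 * dcorr c {#(s, 0), (b, j), (d, k)#} (M - M1)))"
  shows "\<exists>N. dz N = (\<lambda>x. delta (LH c) x + 1/2 * br c p (LH c) (LH c) x)"
proof (intro exI ext)
  fix N :: "'i mono"
  obtain E Q where N: "N = (E, Q)" by (cases N)
  have br: "br c p (LH c) (LH c) (E, Q) = (\<Sum>a\<in>UNIV. \<Sum>b\<in>UNIV. ginv c p a b * smul (vd a (LH c)) (dz (vd b (LH c))) (E, Q))"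
    by (simp add: br_def)
  show "dz (NN c) N = delta (LH c) N + 1/2 * br c p (LH c) (LH c) N"
  proof (cases "caseI E Q")
    case True
    then obtain M u w where e: "E = lift M" "Q = {u, w}" "fst u = 0" "fst w = 1" unfolding caseI_def by blast
    have brI: "br c p (LH c) (LH c) (E, Q) = dcorr c {#ip (snd u), snd w#} M + dcorr c {#snd u, ip (snd w)#} M"
    proof -
      have "br c p (LH c) (LH c) (E, Q) = (\<Sum>a\<in>UNIV. \<Sum>b\<in>UNIV. ginv c p a b * conv (dcorr c {#snd u, (a, 0)#}) (dcorr c {#snd w, (b, 0)#}) M)"
        unfolding br unfolding e(1,2) B_I[OF e(3,4)] ..
      also have "\<dots> = dcorr c {#ip (snd u), snd w#} M + dcorr c {#snd u, ip (snd w)#} M"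
        by (rule two_point[OF vanish TRR nondeg, symmetric])
      finally show ?thesis .
    qed
    have sw: "dcorr c {#ip (snd w), snd u#} M = dcorr c {#snd u, ip (snd w)#} M" by (simp add: add_mset_commute)
    show ?thesis unfolding N brI using e by (simp add: dzN_I delta_I sw algebra_simps)
  next
    case nI: False
    show ?thesis
    proof (cases "caseII E Q")
      case True
      then obtain M z u w where e: "E = add_mset (1, z) (lift M)" "Q = {u, w}" "u \<noteq> w" "fst u = 0" "fst w = 0"
        unfolding caseII_def by blast
      have d0: "delta (LH c) (E, Q) = 0" using delta_supp nI by blast
      have brII: "br c p (LH c) (LH c) (E, Q) = sg u w * (dcorr c {#ip (snd u), snd w, z#} M - dcorr c {#ip (snd w), snd u, z#} M)"
      proof -
        have "br c p (LH c) (LH c) (E, Q) = (\<Sum>a\<in>UNIV. \<Sum>b\<in>UNIV. sg u w * (ginv c p a b * conv (dcorr c {#snd u, (a, 0)#}) (dcorr c {#snd w, (b, 0), z#}) M)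
             - sg u w * (ginv c p a b * conv (dcorr c {#snd w, (a, 0)#}) (dcorr c {#snd u, (b, 0), z#}) M))"
          unfolding br unfolding e(1,2) B_II[OF e(3,4,5)] by (simp add: algebra_simps)
        also have "\<dots> = sg u w * ((\<Sum>a\<in>UNIV. \<Sum>b\<in>UNIV. ginv c p a b * conv (dcorr c {#snd u, (a, 0)#}) (dcorr c {#snd w, (b, 0), z#}) M)
             - (\<Sum>a\<in>UNIV. \<Sum>b\<in>UNIV. ginv c p a b * conv (dcorr c {#snd w, (a, 0)#}) (dcorr c {#snd u, (b, 0), z#}) M))"
          by (simp only: sum_subtractf sum_distrib_left right_diff_distrib)
        also have "\<dots> = sg u w * (dcorr c {#ip (snd u), snd w, z#} M - dcorr c {#ip (snd w), snd u, z#} M)"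
          unfolding TT[OF TRR nondeg] ..
        finally show ?thesis .
      qed
      show ?thesis unfolding N d0 brII unfolding e(1,2) dzN_II[OF e(3,4,5)] by simp
    next
      case nII: False
      have d0: "delta (LH c) (E, Q) = 0" using delta_supp nI by blast
      have z0: "dz (NN c) (E, Q) = 0" using dzN_supp nI nII by blast
      have "smul (vd a (LH c)) (dz (vd b (LH c))) (E, Q) = 0" for a b using B_supp nI nII by blast
      then have b0: "br c p (LH c) (LH c) (E, Q) = 0" unfolding br by simp
      show ?thesis unfolding N d0 z0 b0 by simp
    qed
  qed
qed

end
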